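(* In the setting of the context, if $\rho$ is expectation bounded (i.e. $\rho(X)\ge\mathbb{E}[-X]$ for all $X\in L$), then $\rho_0=0$. If $\rho$ is strictly expectation bounded (i.e. $\rho(X)>\mathbb{E}[-X]$ for all non-constant $X\in L$), then $\Pi^\rho_0=\{\mathbf{0}\}$.
   Context: Let $(\Omega,\mathcal{F},\mathbb{P})$ be a probability space and a market: riskless asset $S^0_0=1$, $S^0_1=1+r$, $r>-1$; risky assets $S^1,\dots,S^d$ with constants $S^i_0>0$ and real-valued $\mathcal{F}$-measurable $S^i_1$; returns $R^i:=(S^i_1-S^i_0)/S^i_0$. Standing assumptions: nonredundancy (if $\theta\in\mathbb{R}^{1+d}$ with $\sum_{i=0}^d\theta^iS^i_t=0$ a.s. for $t\in\{0,1\}$ then $\theta=0$), $R^i\in L^1$, $\mathbb{E}[R^i]\ne r$ for some $i$. Excess return: $X_\pi:=\pi\cdot(R-r\mathbf{1})$; $\Pi_0:=\{\pi:\mathbb{E}[X_\pi]=0\}$. $L$ is a Riesz space with $L^\infty\subset L\subset L^1$ containing all $X_\pi$; $\rho:L\to(-\infty,\infty]$ is monotone, cash-invariant and positively homogeneous. $\rho_0:=\inf\{\rho(X_\pi):\pi\in\Pi_0\}$; $\Pi^\rho_0$ is the set of $\pi\in\Pi_0$ with $\rho(X_\pi)<\infty$ and $\rho(X_\pi)\le\rho(X_{\pi'})$ for all $\pi'\in\Pi_0$. *)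

theory Defs
  imports "HOL-Probability.Probability"
begin

text \<open>Market: riskless asset with S^0_0 = 1, S^0_1 = 1 + r; risky assets indexed by a
finite type 'd, initial prices S0 (vector), terminal prices S1 (random vector).\<close>

definition ret :: "real^'d \<Rightarrow> ('a \<Rightarrow> real^'d) \<Rightarrow> 'd \<Rightarrow> 'a \<Rightarrow> real" where
  "ret S0 S1 i \<omega> = (S1 \<omega> $ i - S0 $ i) / S0 $ i"

definition excess :: "real^'d \<Rightarrow> ('a \<Rightarrow> real^'d) \<Rightarrow> real \<Rightarrow> real^'d \<Rightarrow> 'a \<Rightarrow> real" where
  "excess S0 S1 r \<pi> \<omega> = (\<Sum>i\<in>UNIV. \<pi> $ i * (ret S0 S1 i \<omega> - r))"

definition Pi0 :: "'a measure \<Rightarrow> real^'d \<Rightarrow> ('a \<Rightarrow> real^'d) \<Rightarrow> real \<Rightarrow> (real^'d) set" where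
  "Pi0 M S0 S1 r = {\<pi>. integral\<^sup>L M (excess S0 S1 r \<pi>) = 0}"

definition rho0 :: "'a measure \<Rightarrow> real^'d \<Rightarrow> ('a \<Rightarrow> real^'d) \<Rightarrow> real \<Rightarrow> (('a \<Rightarrow> real) \<Rightarrow> ereal) \<Rightarrow> ereal" where
  "rho0 M S0 S1 r \<rho> = (INF \<pi>\<in>Pi0 M S0 S1 r. \<rho> (excess S0 S1 r \<pi>))"

definition PiRho0 :: "'a measure \<Rightarrow> real^'d \<Rightarrow> ('a \<Rightarrow> real^'d) \<Rightarrow> real \<Rightarrow> (('a \<Rightarrow> real) \<Rightarrow> ereal) \<Rightarrow> (real^'d) set" where
  "PiRho0 M S0 S1 r \<rho> = {\<pi> \<in> Pi0 M S0 S1 r. \<rho> (excess S0 S1 r \<pi>) < \<infinity> \<and>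
      (\<forall>\<pi>'\<in>Pi0 M S0 S1 r. \<rho> (excess S0 S1 r \<pi>) \<le> \<rho> (excess S0 S1 r \<pi>'))}"

definition nonredundant :: "'a measure \<Rightarrow> real \<Rightarrow> real^'d \<Rightarrow> ('a \<Rightarrow> real^'d) \<Rightarrow> bool" where
  "nonredundant M r S0 S1 \<longleftrightarrow> (\<forall>(\<theta>0::real) (\<theta>::real^'d).
     (\<theta>0 + (\<Sum>i\<in>UNIV. \<theta> $ i * S0 $ i) = 0 \<and>
      (AE \<omega> in M. \<theta>0 * (1 + r) + (\<Sum>i\<in>UNIV. \<theta> $ i * S1 \<omega> $ i) = 0))
     \<longrightarrow> \<theta>0 = 0 \<and> \<theta> = 0)"

definition riesz_L :: "'a measure \<Rightarrow> ('a \<Rightarrow> real) set \<Rightarrow> bool" where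
  "riesz_L M L \<longleftrightarrow>
     (\<forall>X. X \<in> borel_measurable M \<and> (\<exists>C. AE \<omega> in M. \<bar>X \<omega>\<bar> \<le> C) \<longrightarrow> X \<in> L) \<and>
     (\<forall>X\<in>L. integrable M X) \<and>
     (\<forall>X\<in>L. \<forall>Y\<in>L. (\<lambda>\<omega>. X \<omega> + Y \<omega>) \<in> L) \<and>
     (\<forall>X\<in>L. \<forall>c::real. (\<lambda>\<omega>. c * X \<omega>) \<in> L) \<and>
     (\<forall>X\<in>L. \<forall>Y\<in>L. (\<lambda>\<omega>. max (X \<omega>) (Y \<omega>)) \<in> L)"

definition risk_measure :: "'a measure \<Rightarrow> ('a \<Rightarrow> real) set \<Rightarrow> (('a \<Rightarrow> real) \<Rightarrow> ereal) \<Rightarrow> bool" where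
  "risk_measure M L \<rho> \<longleftrightarrow>
     (\<forall>X\<in>L. \<rho> X \<noteq> -\<infinity>) \<and>
     (\<forall>X\<in>L. \<forall>Y\<in>L. (AE \<omega> in M. X \<omega> \<le> Y \<omega>) \<longrightarrow> \<rho> Y \<le> \<rho> X) \<and>
     (\<forall>X\<in>L. \<forall>m::real. \<rho> (\<lambda>\<omega>. X \<omega> + m) = \<rho> X - ereal m) \<and>
     (\<forall>X\<in>L. \<forall>c::real. c \<ge> 0 \<longrightarrow> \<rho> (\<lambda>\<omega>. c * X \<omega>) = ereal c * \<rho> X)"

definition expectation_bounded :: "'a measure \<Rightarrow> ('a \<Rightarrow> real) set \<Rightarrow> (('a \<Rightarrow> real) \<Rightarrow> ereal) \<Rightarrow> bool" where
  "expectation_bounded M L \<rho> \<longleftrightarrow> (\<forall>X\<in>L. \<rho> X \<ge> ereal (integral\<^sup>L M (\<lambda>\<omega>. - X \<omega>)))"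

definition strictly_expectation_bounded :: "'a measure \<Rightarrow> ('a \<Rightarrow> real) set \<Rightarrow> (('a \<Rightarrow> real) \<Rightarrow> ereal) \<Rightarrow> bool" where
  "strictly_expectation_bounded M L \<rho> \<longleftrightarrow>
     (\<forall>X\<in>L. \<not> (\<exists>c. AE \<omega> in M. X \<omega> = c) \<longrightarrow> \<rho> X > ereal (integral\<^sup>L M (\<lambda>\<omega>. - X \<omega>)))"

end

theory Submission
  imports Defs
begin

lemma excess_zero: "excess S0 S1 r 0 = (\<lambda>\<omega>. 0)"
  by (auto simp: excess_def fun_eq_iff)

theorem corollary3p9:
  fixes M :: "'a measure" and r :: real
    and S0 :: "real^'d" and S1 :: "'a \<Rightarrow> real^'d"
    and L :: "('a \<Rightarrow> real) set" and \<rho> :: "('a \<Rightarrow> real) \<Rightarrow> ereal"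
  assumes "prob_space M"
    and "r > -1"
    and "\<forall>i. S0 $ i > 0"
    and "\<forall>i. (\<lambda>\<omega>. S1 \<omega> $ i) \<in> borel_measurable M"
    and "nonredundant M r S0 S1"
    and "\<forall>i. integrable M (ret S0 S1 i)"
    and "\<exists>i. integral\<^sup>L M (ret S0 S1 i) \<noteq> r"
    and "riesz_L M L"
    and "\<forall>\<pi>. excess S0 S1 r \<pi> \<in> L"
    and "risk_measure M L \<rho>"
  shows "(expectation_bounded M L \<rho> \<longrightarrow> rho0 M S0 S1 r \<rho> = 0) \<and>
         (strictly_expectation_bounded M L \<rho> \<longrightarrow> PiRho0 M S0 S1 r \<rho> = {0})"
proof -
  let ?X = "excess S0 S1 r"
  have XL: "?X p \<in> L" for p using assms(9) by blast
  have intX: "integrable M (?X p)" for p using XL assms(8) unfolding riesz_L_def by blast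
  have rm: "\<forall>X\<in>L. \<forall>Y\<in>L. (AE \<omega> in M. X \<omega> \<le> Y \<omega>) \<longrightarrow> \<rho> Y \<le> \<rho> X"
    "\<forall>X\<in>L. \<forall>c::real. c \<ge> 0 \<longrightarrow> \<rho> (\<lambda>\<omega>. c * X \<omega>) = ereal c * \<rho> X"
    using assms(10) unfolding risk_measure_def by blast+
  have rho00: "\<rho> (?X 0) = 0"
  proof -
    have "\<rho> (\<lambda>\<omega>. 0 * ?X 0 \<omega>) = ereal 0 * \<rho> (?X 0)" using rm(2) XL by blast
    then show ?thesis by (simp add: excess_zero zero_ereal_def[symmetric])
  qed
  have Pi00: "0 \<in> Pi0 M S0 S1 r" by (simp add: Pi0_def excess_zero)
  have intneg: "integral\<^sup>L M (\<lambda>\<omega>. - ?X p \<omega>) = 0" if "p \<in> Pi0 M S0 S1 r" for p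
    using that by (simp add: Pi0_def)
  have aeconst: "AE \<omega> in M. ?X p \<omega> = 0" if "p \<in> Pi0 M S0 S1 r" "AE \<omega> in M. ?X p \<omega> = c" for p c
  proof -
    have "integral\<^sup>L M (?X p) = integral\<^sup>L M (\<lambda>\<omega>. c)"
      using that(2) intX[of p] by (intro integral_cong_AE) auto
    also have "\<dots> = c" using prob_space.prob_space[OF assms(1)] by simp
    finally have "c = 0" using that(1) by (simp add: Pi0_def)
    then show ?thesis using that(2) by simp
  qed
  have rhoAE0: "\<rho> (?X p) = 0" if "AE \<omega> in M. ?X p \<omega> = 0" for p
  proof -
    have a1: "AE \<omega> in M. ?X 0 \<omega> \<le> ?X p \<omega>" using that by eventually_elim (simp add: excess_zero)
    have a2: "AE \<omega> in M. ?X p \<omega> \<le> ?X 0 \<omega>" using that by eventually_elim (simp add: excess_zero)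
    have "\<rho> (?X p) \<le> \<rho> (?X 0)" using rm(1)[rule_format, OF XL XL a1] .
    moreover have "\<rho> (?X 0) \<le> \<rho> (?X p)" using rm(1)[rule_format, OF XL XL a2] .
    ultimately show ?thesis using rho00 by simp
  qed
  have part1: "rho0 M S0 S1 r \<rho> = 0" if eb: "expectation_bounded M L \<rho>"
  proof -
    have "\<rho> (?X p) \<ge> 0" if "p \<in> Pi0 M S0 S1 r" for p
      using eb XL intneg[OF that] unfolding expectation_bounded_def by (metis zero_ereal_def)
    then show ?thesis unfolding rho0_def
      by (metis (no_types, lifting) Pi00 rho00 INF_eqI)
  qed
  have part2: "PiRho0 M S0 S1 r \<rho> = {0}" if seb: "strictly_expectation_bounded M L \<rho>"
  proof -
    have ge0: "\<rho> (?X p) \<ge> 0" if "p \<in> Pi0 M S0 S1 r" for p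
    proof (cases "\<exists>c. AE \<omega> in M. ?X p \<omega> = c")
      case True
      then obtain c where "AE \<omega> in M. ?X p \<omega> = c" by blast
      then show ?thesis using rhoAE0 aeconst that by simp
    next
      case False
      then have "\<rho> (?X p) > 0" using seb XL intneg[OF that]
        unfolding strictly_expectation_bounded_def by (metis zero_ereal_def)
      then show ?thesis by simp
    qed
    have in0: "0 \<in> PiRho0 M S0 S1 r \<rho>"
      unfolding PiRho0_def using Pi00 rho00 ge0 by auto
    have only0: "p = 0" if p: "p \<in> PiRho0 M S0 S1 r \<rho>" for p
    proof -
      have pP: "p \<in> Pi0 M S0 S1 r" and le: "\<rho> (?X p) \<le> 0"
        using p Pi00 rho00 unfolding PiRho0_def by auto
      have "\<exists>c. AE \<omega> in M. ?X p \<omega> = c"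
      proof (rule ccontr)
        assume "\<not> ?thesis"
        then have "\<rho> (?X p) > 0" using seb XL intneg[OF pP]
          unfolding strictly_expectation_bounded_def by (metis zero_ereal_def)
        then show False using le by simp
      qed
      then obtain c where "AE \<omega> in M. ?X p \<omega> = c" by blast
      then have ae: "AE \<omega> in M. ?X p \<omega> = 0" using aeconst pP by blast
      define th where "th = (\<chi> i. p $ i / S0 $ i)"
      define th0 where "th0 = - (\<Sum>i\<in>UNIV. p $ i)"
      have S0nz: "S0 $ i \<noteq> 0" for i using assms(3) by (metis less_irrefl)
      have t0: "th0 + (\<Sum>i\<in>UNIV. th $ i * S0 $ i) = 0"
        by (simp add: th_def th0_def S0nz)
      have t1: "th0 * (1 + r) + (\<Sum>i\<in>UNIV. th $ i * S1 \<omega> $ i) = ?X p \<omega>" for \<omega>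
      proof -
        have "?X p \<omega> = (\<Sum>i\<in>UNIV. p $ i * S1 \<omega> $ i / S0 $ i - p $ i * (1 + r))"
          unfolding excess_def ret_def
          by (intro sum.cong refl) (simp add: S0nz field_simps)
        also have "\<dots> = (\<Sum>i\<in>UNIV. th $ i * S1 \<omega> $ i) + th0 * (1 + r)"
          by (simp add: sum_subtractf th_def th0_def sum_distrib_right)
        finally show ?thesis by simp
      qed
      have ae1: "AE \<omega> in M. th0 * (1 + r) + (\<Sum>i\<in>UNIV. th $ i * S1 \<omega> $ i) = 0"
        using ae by eventually_elim (simp only: t1)
      have "th0 = 0 \<and> th = 0"
        using assms(5) t0 ae1 unfolding nonredundant_def by blast
      then have "th = 0" by simp
      then show ?thesis
        by (simp add: th_def vec_eq_iff S0nz)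
    qed
    show ?thesis using in0 only0 by blast
  qed
  show ?thesis using part1 part2 by blast
qed

end
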